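(* Let $v \ge 240$ be an integer. Then \[ \beta(4,v,4) \le \left\lfloor \frac{4v-10}{3} \right\rfloor, \] and \[ \beta(4,v,4) \ge \begin{cases} \frac{4v-21}{3} & \text{if } v \equiv 0 \pmod 3,\\ \frac{4v-13}{3} & \text{if } v \equiv 1 \pmod 3,\\ \frac{4v-17}{3} & \text{if } v \equiv 2 \pmod 3. \end{cases} \]
   Context: For integers $v \ge k \ge 2$, a $(v,k)$-packing is a pair $(X,\mathcal{B})$ where $X$ is a set of $v$ points and $\mathcal{B}$ is a set of $k$-subsets of $X$ (blocks) such that every pair of distinct points lies in at most one block. A partial parallel class (PPC) is a set of pairwise disjoint blocks; its size is the number of blocks. A PPC of size $\rho$ is maximum if the packing has no PPC of size $\rho+1$. $\beta(\rho,v,k)$ denotes the maximum number of blocks in a $(v,k)$-packing in which the maximum PPC has size $\rho$. *)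

theory Defs
  imports Complex_Main
begin

definition packing :: "'a set \<Rightarrow> nat \<Rightarrow> 'a set set \<Rightarrow> bool" where
  "packing X k \<B> \<longleftrightarrow>
     (\<forall>B\<in>\<B>. B \<subseteq> X \<and> card B = k) \<and>
     (\<forall>x\<in>X. \<forall>y\<in>X. x \<noteq> y \<longrightarrow> card {B\<in>\<B>. x \<in> B \<and> y \<in> B} \<le> 1)"

definition ppc :: "'a set set \<Rightarrow> 'a set set \<Rightarrow> bool" where
  "ppc \<B> P \<longleftrightarrow> P \<subseteq> \<B> \<and> (\<forall>B\<in>P. \<forall>C\<in>P. B \<noteq> C \<longrightarrow> B \<inter> C = {})"

definition max_ppc_size :: "'a set set \<Rightarrow> nat \<Rightarrow> bool" where
  "max_ppc_size \<B> \<rho> \<longleftrightarrow>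
     (\<exists>P. ppc \<B> P \<and> card P = \<rho>) \<and> \<not> (\<exists>P. ppc \<B> P \<and> card P = \<rho> + 1)"

definition beta :: "nat \<Rightarrow> nat \<Rightarrow> nat \<Rightarrow> nat" where
  "beta \<rho> v k = Max {card \<B> | \<B>. packing {..<v} k \<B> \<and> max_ppc_size \<B> \<rho>}"

end

theory Submission
  imports Defs
begin


definition deg :: "'a set set \<Rightarrow> 'a \<Rightarrow> nat" where
  "deg \<B> x = card {B\<in>\<B>. x \<in> B}"

lemma pk_finite:
  assumes "packing X k \<B>" "finite X"
  shows "finite \<B>"
proof -
  have "\<B> \<subseteq> Pow X" using assms(1) unfolding packing_def by auto
  thus ?thesis using assms(2) finite_subset by blast
qed

lemma pk_two:
  assumes "packing X k \<B>" "finite X" "B1 \<in> \<B>" "B2 \<in> \<B>" "x \<in> B1" "x \<in> B2" "y \<in> B1" "y \<in> B2" "x \<noteq> y"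
  shows "B1 = B2"
proof -
  have xX: "x \<in> X" "y \<in> X" using assms unfolding packing_def by auto
  have c: "card {B\<in>\<B>. x \<in> B \<and> y \<in> B} \<le> Suc 0"
    using assms(1) xX assms(9) unfolding packing_def by auto
  have "finite {B\<in>\<B>. x \<in> B \<and> y \<in> B}" using pk_finite[OF assms(1,2)] by auto
  with c have "\<forall>a1\<in>{B\<in>\<B>. x \<in> B \<and> y \<in> B}. \<forall>a2\<in>{B\<in>\<B>. x \<in> B \<and> y \<in> B}. a1 = a2"
    using card_le_Suc0_iff_eq by blast
  thus ?thesis using assms by blast
qed

lemma through_meet:
  assumes "packing X k \<B>" "finite X" "h \<notin> Y" "finite Y"
  shows "card {B\<in>\<B>. h \<in> B \<and> B \<inter> Y \<noteq> {}} \<le> card Y"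
proof -
  have eq: "{B\<in>\<B>. h \<in> B \<and> B \<inter> Y \<noteq> {}} = (\<Union>y\<in>Y. {B\<in>\<B>. h \<in> B \<and> y \<in> B})" by auto
  have "card (\<Union>y\<in>Y. {B\<in>\<B>. h \<in> B \<and> y \<in> B}) \<le> (\<Sum>y\<in>Y. card {B\<in>\<B>. h \<in> B \<and> y \<in> B})"
    using card_UN_le[OF assms(4)] by blast
  also have "\<dots> \<le> (\<Sum>y\<in>Y. 1)"
  proof (rule sum_mono)
    fix y assume "y \<in> Y"
    hence hy: "h \<noteq> y" using assms(3) by auto
    have fin: "finite {B\<in>\<B>. h \<in> B \<and> y \<in> B}" using pk_finite[OF assms(1,2)] by auto
    have "\<forall>a1\<in>{B\<in>\<B>. h \<in> B \<and> y \<in> B}. \<forall>a2\<in>{B\<in>\<B>. h \<in> B \<and> y \<in> B}. a1 = a2"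
      using pk_two[OF assms(1,2)] hy by blast
    hence "card {B\<in>\<B>. h \<in> B \<and> y \<in> B} \<le> Suc 0" using card_le_Suc0_iff_eq[OF fin] by blast
    thus "card {B\<in>\<B>. h \<in> B \<and> y \<in> B} \<le> 1" by simp
  qed
  also have "\<dots> = card Y" by simp
  finally show ?thesis using eq by simp
qed

lemma ppc_finite:
  assumes "packing X k \<B>" "finite X" "ppc \<B> Q" shows "finite Q"
proof -
  have "Q \<subseteq> \<B>" using assms(3) unfolding ppc_def by simp
  thus ?thesis using pk_finite[OF assms(1,2)] by (rule finite_subset)
qed

lemma union_card:
  assumes "packing X 4 \<B>" "finite X" "ppc \<B> Q"
  shows "card (\<Union>Q) \<le> 4 * card Q"
proof -
  have "card (\<Union>Q) \<le> sum card Q" by (rule card_Union_le_sum_card)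
  also have "\<dots> = sum (\<lambda>_. 4) Q"
    using assms unfolding ppc_def packing_def by (intro sum.cong) auto
  also have "\<dots> = 4 * card Q" by simp
  finally show ?thesis .
qed

lemma ext_ppc:
  assumes pk: "packing X 4 \<B>" and fX: "finite X"
  shows "finite S \<Longrightarrow> S \<subseteq> X \<Longrightarrow> (\<forall>h\<in>S. deg \<B> h \<ge> 17) \<Longrightarrow> ppc \<B> Q
    \<Longrightarrow> (\<forall>B\<in>Q. B \<inter> S = {}) \<Longrightarrow> card Q + card S \<le> 5
    \<Longrightarrow> \<exists>Q'. ppc \<B> Q' \<and> card Q' = card Q + card S"
proof (induction S arbitrary: Q rule: finite_induct)
  case empty
  then show ?case by auto
next
  case (insert h S)
  define Y where "Y = \<Union>Q \<union> S"
  have fQ: "finite Q" using ppc_finite[OF pk fX insert.prems(3)] .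
  have "\<forall>B\<in>Q. finite B" using pk insert.prems(3) unfolding ppc_def packing_def
    by (metis card.infinite subsetD zero_neq_numeral)
  hence fY: "finite Y" unfolding Y_def using insert.hyps(1) fQ by auto
  have hY: "h \<notin> Y" unfolding Y_def using insert.prems(4) insert.hyps(2) by auto
  have "card Y \<le> card (\<Union>Q) + card S" unfolding Y_def by (rule card_Un_le)
  also have "\<dots> \<le> 4 * card Q + card S" using union_card[OF pk fX insert.prems(3)] by simp
  also have "\<dots> \<le> 16" using insert.prems(5) insert.hyps by simp
  finally have cY: "card Y \<le> 16" .
  have c16: "card {B\<in>\<B>. h \<in> B \<and> B \<inter> Y \<noteq> {}} \<le> 16"
    using through_meet[OF pk fX hY fY] cY by simp
  have d17: "deg \<B> h \<ge> 17" using insert.prems(2) by simp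
  have "\<not> {B\<in>\<B>. h \<in> B} \<subseteq> {B\<in>\<B>. h \<in> B \<and> B \<inter> Y \<noteq> {}}"
  proof
    assume sub: "{B\<in>\<B>. h \<in> B} \<subseteq> {B\<in>\<B>. h \<in> B \<and> B \<inter> Y \<noteq> {}}"
    have "finite {B\<in>\<B>. h \<in> B \<and> B \<inter> Y \<noteq> {}}" using pk_finite[OF pk fX] by auto
    from card_mono[OF this sub] show False using c16 d17 unfolding deg_def by simp
  qed
  then obtain C where C: "C \<in> \<B>" "h \<in> C" "C \<inter> Y = {}" by auto
  define Q1 where "Q1 = insert C Q"
  have CQ: "C \<notin> Q" using C(2) insert.prems(4) by auto
  have ppc1: "ppc \<B> Q1" using insert.prems(3) C unfolding Q1_def ppc_def Y_def by auto
  have cQ1: "card Q1 = card Q + 1" unfolding Q1_def using fQ CQ by simp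
  have av: "\<forall>B\<in>Q1. B \<inter> S = {}" using insert.prems(4) C(3) unfolding Q1_def Y_def by auto
  have "card Q1 + card S \<le> 5" using cQ1 insert.prems(5) insert.hyps by simp
  then obtain Q' where "ppc \<B> Q'" "card Q' = card Q1 + card S"
    using insert.IH[OF _ _ ppc1 av] insert.prems(1,2) by auto
  thus ?case using cQ1 insert.hyps by auto
qed

lemma ppc_subset: "ppc F P \<Longrightarrow> T \<subseteq> P \<Longrightarrow> ppc F T"
  unfolding ppc_def by blast

lemma bound_F:
  assumes pk: "packing X 4 \<B>" and fX: "finite X" and FB: "F \<subseteq> \<B>"
    and dF: "\<forall>B\<in>F. \<forall>x\<in>B. deg \<B> x \<le> 16"
    and noP: "\<not> (\<exists>Q. ppc F Q \<and> card Q = r + 1)"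
  shows "card F \<le> 64 * r"
proof -
  have fB: "finite \<B>" using pk_finite[OF pk fX] .
  have fF: "finite F" using fB FB finite_subset by blast
  define PP where "PP = {Q. ppc F Q}"
  have fPP: "finite PP" unfolding PP_def ppc_def using fF by auto
  have ePP: "{} \<in> PP" unfolding PP_def ppc_def by auto
  define c where "c = Max (card ` PP)"
  have "c \<in> card ` PP" unfolding c_def using fPP ePP by (intro Max_in) auto
  then obtain P where P: "ppc F P" "card P = c" unfolding PP_def by auto
  have maxP: "\<And>Q. ppc F Q \<Longrightarrow> card Q \<le> c" unfolding c_def PP_def using fPP
    by (intro Max_ge) (auto simp: PP_def)
  have fP: "finite P" using P(1) fF unfolding ppc_def using finite_subset by blast
  have PB: "ppc \<B> P" using P(1) FB unfolding ppc_def by auto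
  have cr: "card P \<le> r"
  proof (rule ccontr)
    assume "\<not> card P \<le> r"
    then obtain T where "T \<subseteq> P" "card T = r + 1" using obtain_subset_with_card_n[of "r+1" P] by auto
    thus False using noP ppc_subset[OF P(1)] by blast
  qed
  have cardB: "\<And>B. B \<in> \<B> \<Longrightarrow> card B = 4" using pk unfolding packing_def by auto
  have meet: "\<And>C. C \<in> F \<Longrightarrow> C \<inter> \<Union>P \<noteq> {}"
  proof (rule ccontr)
    fix C assume C: "C \<in> F" "\<not> C \<inter> \<Union>P \<noteq> {}"
    have "C \<noteq> {}" using cardB[of C] C(1) FB by auto
    hence CP: "C \<notin> P" using C(2) by auto
    have "ppc F (insert C P)" using P(1) C unfolding ppc_def by auto
    hence "card (insert C P) \<le> c" by (rule maxP)
    thus False using CP fP P(2) by simp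
  qed
  have Fsub: "F \<subseteq> (\<Union>x\<in>\<Union>P. {B\<in>\<B>. x \<in> B})"
  proof
    fix C assume C: "C \<in> F"
    then obtain x where x: "x \<in> C" "x \<in> \<Union>P" using meet[OF C] by blast
    have "C \<in> {B\<in>\<B>. x \<in> B}" using C FB x(1) by auto
    thus "C \<in> (\<Union>x\<in>\<Union>P. {B\<in>\<B>. x \<in> B})" using x(2) by blast
  qed
  have finB: "\<And>B. B \<in> \<B> \<Longrightarrow> finite B" using cardB by (metis card.infinite zero_neq_numeral)
  have fU: "finite (\<Union>P)" using fP PB finB unfolding ppc_def by (intro finite_Union) auto
  have finU: "finite (\<Union>x\<in>\<Union>P. {B\<in>\<B>. x \<in> B})" by (rule finite_subset[OF _ fB]) blast
  have "card F \<le> card (\<Union>x\<in>\<Union>P. {B\<in>\<B>. x \<in> B})"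
    by (rule card_mono[OF finU Fsub])
  also have "\<dots> \<le> (\<Sum>x\<in>\<Union>P. card {B\<in>\<B>. x \<in> B})" by (rule card_UN_le[OF fU])
  also have "\<dots> \<le> (\<Sum>x\<in>\<Union>P. 16)"
    using dF P(1) unfolding deg_def ppc_def by (intro sum_mono) auto
  also have "\<dots> = 16 * card (\<Union>P)" by simp
  also have "\<dots> \<le> 16 * (4 * card P)" using union_card[OF pk fX PB] by simp
  also have "\<dots> \<le> 64 * r" using cr by simp
  finally show ?thesis .
qed

lemma prod_ge3: "1 \<le> (j::nat) \<Longrightarrow> j \<le> 3 \<Longrightarrow> 3 \<le> j * (4 - j)"
  by (cases j; cases "j - 1"; cases "j - 2"; auto)

lemma upper_main:
  assumes pk: "packing {..<v} 4 \<B>" and mx: "max_ppc_size \<B> 4" and v: "v \<ge> 240"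
  shows "3 * card \<B> \<le> 4 * v - 10"
proof -
  define X where "X = {..<v}"
  have fX: "finite X" unfolding X_def by simp
  have pk': "packing X 4 \<B>" using pk unfolding X_def .
  have fB: "finite \<B>" using pk_finite[OF pk' fX] .
  have cardB: "\<And>B. B \<in> \<B> \<Longrightarrow> card B = 4" using pk unfolding packing_def by auto
  have BX: "\<And>B. B \<in> \<B> \<Longrightarrow> B \<subseteq> X" using pk unfolding packing_def X_def by auto
  have fin: "\<And>B. B \<in> \<B> \<Longrightarrow> finite B" using cardB by (metis card.infinite zero_neq_numeral)
  have no5: "\<And>Q. ppc \<B> Q \<Longrightarrow> card Q \<noteq> 5" using mx unfolding max_ppc_size_def by auto
  define H where "H = {x\<in>X. deg \<B> x \<ge> 17}"
  define s where "s = card H"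
  have fH: "finite H" unfolding H_def using fX by auto
  have HX: "H \<subseteq> X" unfolding H_def by auto
  have s4: "s \<le> 4"
  proof (rule ccontr)
    assume "\<not> s \<le> 4"
    then obtain S where S: "S \<subseteq> H" "card S = 5" "finite S"
      using obtain_subset_with_card_n[of 5 H] unfolding s_def by auto
    have "ppc \<B> {}" unfolding ppc_def by auto
    then obtain Q' where "ppc \<B> Q'" "card Q' = 5"
      using ext_ppc[OF pk' fX S(3), of "{}"] S HX unfolding H_def by auto
    thus False using no5 by blast
  qed
  define F where "F = {B\<in>\<B>. B \<inter> H = {}}"
  define M where "M = {B\<in>\<B>. B \<inter> H \<noteq> {}}"
  have noF: "\<not> (\<exists>Q. ppc F Q \<and> card Q = (4 - s) + 1)"
  proof
    assume "\<exists>Q. ppc F Q \<and> card Q = (4 - s) + 1"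
    then obtain Q where Q: "ppc F Q" "card Q = 5 - s" using s4 by auto
    have QB: "ppc \<B> Q" using Q(1) unfolding ppc_def F_def by auto
    have "\<forall>B\<in>Q. B \<inter> H = {}" using Q(1) unfolding ppc_def F_def by auto
    then obtain Q' where "ppc \<B> Q'" "card Q' = card Q + card H"
      using ext_ppc[OF pk' fX fH HX _ QB] Q(2) s4 unfolding H_def s_def by auto
    thus False using no5 Q(2) s4 unfolding s_def by auto
  qed
  have cF: "card F \<le> 64 * (4 - s)"
  proof (rule bound_F[OF pk' fX _ _ noF])
    show "F \<subseteq> \<B>" unfolding F_def by auto
    show "\<forall>B\<in>F. \<forall>x\<in>B. deg \<B> x \<le> 16" unfolding F_def H_def using BX by fastforce
  qed
  define M1 where "M1 = {B\<in>\<B>. B \<inter> H \<noteq> {} \<and> \<not> B \<subseteq> H}"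
  define M2 where "M2 = {B\<in>\<B>. B \<subseteq> H}"
  have M2: "card M2 \<le> 1"
  proof -
    have "M2 \<subseteq> {H}"
    proof
      fix B assume "B \<in> M2"
      hence "B \<in> \<B>" "B \<subseteq> H" unfolding M2_def by auto
      moreover have "card H \<le> card B" using cardB[OF \<open>B \<in> \<B>\<close>] s4 unfolding s_def by simp
      moreover have "card B \<le> card H" using card_mono[OF fH \<open>B \<subseteq> H\<close>] .
      ultimately have "B = H" using card_subset_eq[OF fH \<open>B \<subseteq> H\<close>] by simp
      thus "B \<in> {H}" by simp
    qed
    hence "card M2 \<le> card {H}" by (intro card_mono) auto
    thus ?thesis by simp
  qed
  define A where "A = (\<lambda>B. (B \<inter> H) \<times> (B - H))"
  have fM1: "finite M1" using fB unfolding M1_def by auto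
  have disj: "\<forall>i\<in>M1. \<forall>j\<in>M1. i \<noteq> j \<longrightarrow> A i \<inter> A j = {}"
  proof (intro ballI impI)
    fix B1 B2 assume B: "B1 \<in> M1" "B2 \<in> M1" "B1 \<noteq> B2"
    show "A B1 \<inter> A B2 = {}"
    proof (rule ccontr)
      assume "A B1 \<inter> A B2 \<noteq> {}"
      then obtain h y where "h \<in> B1" "h \<in> B2" "y \<in> B1" "y \<in> B2" "h \<in> H" "y \<notin> H"
        unfolding A_def by auto
      hence "B1 = B2" using pk_two[OF pk' fX, of B1 B2 h y] B unfolding M1_def by auto
      thus False using B(3) by simp
    qed
  qed
  have "3 * card M1 = (\<Sum>B\<in>M1. 3)" by simp
  also have "\<dots> \<le> (\<Sum>B\<in>M1. card (A B))"
  proof (rule sum_mono)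
    fix B assume B: "B \<in> M1"
    have fBB: "finite B" using fin B unfolding M1_def by auto
    have c1: "card (B \<inter> H) \<ge> 1" using B fBB unfolding M1_def
      by (simp add: Suc_le_eq card_gt_0_iff)
    have c2: "card (B \<inter> H) \<le> 3"
    proof -
      have "B \<inter> H \<subset> B" using B unfolding M1_def by auto
      hence "card (B \<inter> H) < card B" using psubset_card_mono fBB by blast
      thus ?thesis using cardB B unfolding M1_def by auto
    qed
    have "card (B - H) = card B - card (B \<inter> H)" using fBB by (simp add: card_Diff_subset_Int)
    hence "card (B - H) = 4 - card (B \<inter> H)" using cardB[of B] B unfolding M1_def by simp
    hence "card (A B) = card (B \<inter> H) * (4 - card (B \<inter> H))" unfolding A_def by (simp add: card_cartesian_product)
    thus "3 \<le> card (A B)" using prod_ge3[OF c1 c2] by simp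
  qed
  also have "\<dots> = card (\<Union>(A ` M1))"
    using fin fH fM1 unfolding M1_def A_def
    by (intro card_UN_disjoint[symmetric] disj[unfolded A_def M1_def]) auto
  also have "\<dots> \<le> card (H \<times> (X - H))"
    using BX fX fH unfolding A_def M1_def by (intro card_mono) auto
  also have "\<dots> = s * (v - s)" unfolding s_def using HX fX fH
    by (simp add: card_cartesian_product card_Diff_subset X_def)
  finally have cM1: "3 * card M1 \<le> s * (v - s)" .
  have "\<B> = M1 \<union> M2 \<union> F" unfolding M1_def M2_def F_def using cardB by auto
  hence "card \<B> \<le> card (M1 \<union> M2) + card F" using card_Un_le by metis
  hence "card \<B> \<le> card M1 + card M2 + card F" using card_Un_le[of M1 M2] by linarith
  hence "3 * card \<B> \<le> s * (v - s) + 3 + 192 * (4 - s)" using cM1 M2 cF by linarith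
  moreover have "s * (v - s) + 3 + 192 * (4 - s) \<le> 4 * v - 10"
  proof -
    have "s = 0 \<or> s = 1 \<or> s = 2 \<or> s = 3 \<or> s = 4" using s4 by auto
    thus ?thesis using v by (elim disjE) (simp_all add: algebra_simps)
  qed
  ultimately show ?thesis by linarith
qed



definition blk :: "nat \<Rightarrow> nat \<Rightarrow> nat \<Rightarrow> nat set" where
  "blk m j a = {j, 4 + a, 4 + m + (a + j) mod m, 4 + 2*m + (a + 2*j) mod m}"

lemma modeq_dvd: "(p::nat) mod m = q mod m \<Longrightarrow> int m dvd int p - int q"
  by (metis mod_eq_dvd_iff of_nat_mod)

lemma dvd_small: "int (m::nat) dvd (d::int) \<Longrightarrow> \<bar>d\<bar> < int m \<Longrightarrow> d = 0"
  by (metis abs_of_nat dvd_imp_le_int not_le)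

lemma pt_abs:
  fixes x j j' a a' m c2 c3 c2' c3' :: nat
  assumes "x \<in> {j, 4 + a, 4 + m + c2, 4 + 2*m + c3}" "x \<in> {j', 4 + a', 4 + m + c2', 4 + 2*m + c3'}"
    "j < 4" "j' < 4" "a < m" "a' < m" "c2 < m" "c3 < m" "c2' < m" "c3' < m"
  shows "(x = j \<and> j = j') \<or> (x = 4 + a \<and> a = a') \<or> (x = 4 + m + c2 \<and> c2 = c2')
    \<or> (x = 4 + 2*m + c3 \<and> c3 = c3')"
  using assms(1,2) unfolding insert_iff empty_iff simp_thms by (elim disjE; use assms(3-10) in simp)

lemma blk_pt:
  assumes "x \<in> blk m j a" "x \<in> blk m j' a'" "j < 4" "j' < 4" "a < m" "a' < m" "8 < m"
  shows "(x = j \<and> j = j') \<or> (x = 4 + a \<and> a = a')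
    \<or> (x = 4 + m + (a + j) mod m \<and> (a + j) mod m = (a' + j') mod m)
    \<or> (x = 4 + 2*m + (a + 2*j) mod m \<and> (a + 2*j) mod m = (a' + 2*j') mod m)"
proof -
  have m0: "m > 0" using assms by simp
  show ?thesis
    by (rule pt_abs[OF assms(1,2)[unfolded blk_def] assms(3-6)]) (use m0 in auto)
qed

lemma blk_agree:
  fixes j j' a a' m :: nat
  assumes "j < 4" "j' < 4" "a < m" "a' < m" "8 < m"
  shows
    "j = j' \<Longrightarrow> (a + j) mod m = (a' + j') mod m \<Longrightarrow> a = a'"
    "j = j' \<Longrightarrow> (a + 2*j) mod m = (a' + 2*j') mod m \<Longrightarrow> a = a'"
    "a = a' \<Longrightarrow> (a + j) mod m = (a' + j') mod m \<Longrightarrow> j = j'"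
    "a = a' \<Longrightarrow> (a + 2*j) mod m = (a' + 2*j') mod m \<Longrightarrow> j = j'"
    "(a + j) mod m = (a' + j') mod m \<Longrightarrow> (a + 2*j) mod m = (a' + 2*j') mod m \<Longrightarrow> j = j'"
proof -
  show "j = j' \<Longrightarrow> (a + j) mod m = (a' + j') mod m \<Longrightarrow> a = a'"
  proof -
    assume h: "j = j'" "(a + j) mod m = (a' + j') mod m"
    have "int m dvd int (a + j) - int (a' + j')" using modeq_dvd[OF h(2)] .
    hence "int m dvd int a - int a'" using h(1) by simp
    hence "int a - int a' = 0" by (rule dvd_small) (use assms in arith)
    thus "a = a'" by simp
  qed
  show "j = j' \<Longrightarrow> (a + 2*j) mod m = (a' + 2*j') mod m \<Longrightarrow> a = a'"
  proof -
    assume h: "j = j'" "(a + 2*j) mod m = (a' + 2*j') mod m"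
    have "int m dvd int (a + 2*j) - int (a' + 2*j')" using modeq_dvd[OF h(2)] .
    hence "int m dvd int a - int a'" using h(1) by simp
    hence "int a - int a' = 0" by (rule dvd_small) (use assms in arith)
    thus "a = a'" by simp
  qed
  show "a = a' \<Longrightarrow> (a + j) mod m = (a' + j') mod m \<Longrightarrow> j = j'"
  proof -
    assume h: "a = a'" "(a + j) mod m = (a' + j') mod m"
    have "int m dvd int (a + j) - int (a' + j')" using modeq_dvd[OF h(2)] .
    hence "int m dvd int j - int j'" using h(1) by simp
    hence "int j - int j' = 0" by (rule dvd_small) (use assms in arith)
    thus "j = j'" by simp
  qed
  show "a = a' \<Longrightarrow> (a + 2*j) mod m = (a' + 2*j') mod m \<Longrightarrow> j = j'"
  proof -
    assume h: "a = a'" "(a + 2*j) mod m = (a' + 2*j') mod m"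
    have "int m dvd int (a + 2*j) - int (a' + 2*j')" using modeq_dvd[OF h(2)] .
    hence "int m dvd 2 * int j - 2 * int j'" using h(1) by simp
    hence "2 * int j - 2 * int j' = 0" by (rule dvd_small) (use assms in arith)
    thus "j = j'" by simp
  qed
  show "(a + j) mod m = (a' + j') mod m \<Longrightarrow> (a + 2*j) mod m = (a' + 2*j') mod m \<Longrightarrow> j = j'"
  proof -
    assume h: "(a + j) mod m = (a' + j') mod m" "(a + 2*j) mod m = (a' + 2*j') mod m"
    have d1: "int m dvd int (a + j) - int (a' + j')" using modeq_dvd[OF h(1)] .
    have d2: "int m dvd int (a + 2*j) - int (a' + 2*j')" using modeq_dvd[OF h(2)] .
    have "int m dvd (int (a + 2*j) - int (a' + 2*j')) - (int (a + j) - int (a' + j'))"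
      using d1 d2 by (rule dvd_diff[rotated])
    hence "int m dvd int j - int j'" by (simp add: algebra_simps)
    hence "int j - int j' = 0" by (rule dvd_small) (use assms in arith)
    thus "j = j'" by simp
  qed
qed

lemma blk_two:
  assumes "x \<in> blk m j a" "x \<in> blk m j' a'" "y \<in> blk m j a" "y \<in> blk m j' a'" "x \<noteq> y"
    "j < 4" "j' < 4" "a < m" "a' < m" "8 < m"
  shows "j = j' \<and> a = a'"
proof -
  note ag = blk_agree[OF assms(6-10)]
  note px = blk_pt[OF assms(1,2) assms(6-10)]
  note py = blk_pt[OF assms(3,4) assms(6-10)]
  from px py assms(5) show ?thesis
    using ag by metis
qed

lemma low_abs:
  fixes j a m c2 c3 :: nat
  assumes "j < 4" "a < m" "c2 < m" "c3 < m"
  shows "{j, 4 + a, 4 + m + c2, 4 + 2*m + c3} \<inter> {..<4} = {j}"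
    "{j, 4 + a, 4 + m + c2, 4 + 2*m + c3} \<inter> {4..<4+m} = {4 + a}"
    "card {j, 4 + a, 4 + m + c2, 4 + 2*m + c3} = 4"
    "4 + 3*m \<le> v \<Longrightarrow> {j, 4 + a, 4 + m + c2, 4 + 2*m + c3} \<subseteq> {..<v}"
  using assms by auto

lemma blk_low:
  assumes "j < 4" "a < m" "8 < m"
  shows "blk m j a \<inter> {..<4} = {j}" "blk m j a \<inter> {4..<4+m} = {4 + a}"
    "card (blk m j a) = 4" "4 + 3*m \<le> v \<Longrightarrow> blk m j a \<subseteq> {..<v}"
proof -
  have m0: "m > 0" using assms by simp
  have b: "(a + j) mod m < m" "(a + 2*j) mod m < m" using m0 by auto
  note L = low_abs[OF assms(1,2) b]
  show "blk m j a \<inter> {..<4} = {j}" "blk m j a \<inter> {4..<4+m} = {4 + a}"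
    "card (blk m j a) = 4" "4 + 3*m \<le> v \<Longrightarrow> blk m j a \<subseteq> {..<v}"
    unfolding blk_def using L by auto
qed

lemma blk_card:
  assumes "j < 4" "a < m" "8 < m"
  shows "card (blk m j a) = 4"
  using blk_low(3)[OF assms] .

lemma blk_sub:
  assumes "j < 4" "a < m" "8 < m" "4 + 3*m \<le> v"
  shows "blk m j a \<subseteq> {..<v}"
  using blk_low(4)[OF assms] .

lemma ne_by: "x \<in> A \<Longrightarrow> x \<notin> B \<Longrightarrow> A \<noteq> B" by auto

definition fam :: "nat \<Rightarrow> nat set set" where
  "fam m = insert {0,1,2,3} ((\<lambda>(j,a). blk m j a) ` ({..<4} \<times> {..<m}))"

lemma fam_cases:
  assumes "B \<in> fam m"
  obtains "B = {0,1,2,3}" | j a where "j < 4" "a < m" "B = blk m j a"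
  using assms unfolding fam_def by auto

lemma fam_meet:
  assumes "B \<in> fam m" "8 < m"
  shows "\<exists>t. t < 4 \<and> t \<in> B"
  using assms(1)
proof (cases rule: fam_cases)
  case 1 thus ?thesis by (intro exI[of _ 0]) simp
next
  case (2 j a) thus ?thesis using blk_low(1)[of j a m] assms(2) by auto
qed

lemma fam_packing:
  assumes "8 < m" "4 + 3*m \<le> v"
  shows "packing {..<v} 4 (fam m)"
  unfolding packing_def
proof (intro conjI ballI impI)
  fix B assume "B \<in> fam m"
  thus "B \<subseteq> {..<v}"
    by (cases rule: fam_cases) (use assms blk_sub in auto)
  from \<open>B \<in> fam m\<close> show "card B = 4"
    by (cases rule: fam_cases) (use assms blk_card in auto)
next
  fix x y assume xy: "x \<in> {..<v}" "y \<in> {..<v}" "x \<noteq> y"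
  have fin: "finite {B \<in> fam m. x \<in> B \<and> y \<in> B}" unfolding fam_def by auto
  have "\<forall>B1\<in>{B \<in> fam m. x \<in> B \<and> y \<in> B}. \<forall>B2\<in>{B \<in> fam m. x \<in> B \<and> y \<in> B}. B1 = B2"
  proof (intro ballI)
    fix B1 B2 assume B1: "B1 \<in> {B \<in> fam m. x \<in> B \<and> y \<in> B}" and B2: "B2 \<in> {B \<in> fam m. x \<in> B \<and> y \<in> B}"
    have T: "False" if "j < 4" "a < m" "x \<in> blk m j a" "y \<in> blk m j a" "x \<in> {0,1,2,3}" "y \<in> {0,1,2,3}" for j a
    proof -
      have "x \<in> blk m j a \<inter> {..<4}" "y \<in> blk m j a \<inter> {..<4}" using that by auto
      thus False using blk_low(1)[OF that(1,2) assms(1)] xy(3) by auto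
    qed
    from B1 have "B1 \<in> fam m" by simp
    thus "B1 = B2"
    proof (cases rule: fam_cases)
      case 1
      from B2 have "B2 \<in> fam m" by simp
      thus ?thesis
      proof (cases rule: fam_cases)
        case 1 thus ?thesis using \<open>B1 = _\<close> by simp
      next
        case (2 j a) thus ?thesis using T[of j a] B1 B2 \<open>B1 = _\<close> by auto
      qed
    next
      case (2 j a)
      note ja = this
      from B2 have "B2 \<in> fam m" by simp
      thus ?thesis
      proof (cases rule: fam_cases)
        case 1 thus ?thesis using T[of j a] B1 B2 ja by auto
      next
        case (2 j' a')
        have "j = j' \<and> a = a'"
          using blk_two[of x m j a j' a' y] B1 B2 ja 2 xy(3) assms(1) by auto
        thus ?thesis using ja 2 by simp
      qed
    qed
  qed
  thus "card {B \<in> fam m. x \<in> B \<and> y \<in> B} \<le> 1" using card_le_Suc0_iff_eq[OF fin] by simp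
qed

lemma fam_card:
  assumes "8 < m"
  shows "card (fam m) = 4 * m + 1"
proof -
  have inj: "inj_on (\<lambda>(j,a). blk m j a) ({..<4} \<times> {..<m})"
  proof (rule inj_onI, clarify)
    fix j a j' a' assume h: "j < (4::nat)" "a < m" "j' < (4::nat)" "a' < m" "blk m j a = blk m j' a'"
    have "{j} = {j'}" using blk_low(1)[OF h(1,2) assms] blk_low(1)[OF h(3,4) assms] h(5) by simp
    moreover have "{4 + a} = {4 + a'}" using blk_low(2)[OF h(1,2) assms] blk_low(2)[OF h(3,4) assms] h(5) by simp
    ultimately show "j = j' \<and> a = a'" by simp
  qed
  have notin: "{0,1,2,3} \<notin> (\<lambda>(j,a). blk m j a) ` ({..<4} \<times> {..<m})"
  proof
    assume "{0,1,2,3} \<in> (\<lambda>(j,a). blk m j a) ` ({..<4} \<times> {..<m})"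
    then obtain j a where h: "j < 4" "a < m" "{0,1,2,3} = blk m j a" by auto
    have e1: "{0,1,2,3} \<inter> {..<4} = {j::nat}" using blk_low(1)[OF h(1,2) assms] h(3) by simp
    have e2: "{0,1,2,3} \<inter> {..<4} = {0,1,2,3::nat}" by auto
    from e1[symmetric] e2 have eq: "{j} = {0,1,2,3::nat}" by (rule trans)
    have "(0::nat) \<in> {j}" "(1::nat) \<in> {j}" unfolding eq by simp_all
    thus False by auto
  qed
  have "card ((\<lambda>(j,a). blk m j a) ` ({..<4} \<times> {..<m})) = 4 * m"
    using card_image[OF inj] by (simp add: card_cartesian_product)
  thus ?thesis unfolding fam_def using notin by simp
qed

lemma fam_maxppc:
  assumes "78 \<le> m"
  shows "max_ppc_size (fam m) 4"
  unfolding max_ppc_size_def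
proof
  define P where "P = {blk m 0 0, blk m 1 10, blk m 2 20, blk m 3 30}"
  have e: "blk m 0 0 = {0, 4, 4 + m, 4 + 2*m}" "blk m 1 10 = {1, 14, 4 + m + 11, 4 + 2*m + 12}"
    "blk m 2 20 = {2, 24, 4 + m + 22, 4 + 2*m + 24}" "blk m 3 30 = {3, 34, 4 + m + 33, 4 + 2*m + 36}"
    unfolding blk_def using assms by auto
  have sub: "P \<subseteq> fam m" unfolding P_def fam_def using assms by force
  have "ppc (fam m) P" unfolding ppc_def P_def using sub[unfolded P_def] unfolding e using assms by auto
  moreover have "card P = 4"
  proof -
    have n0: "blk m 0 0 \<noteq> blk m 1 10" by (unfold e, rule ne_by[of 0]) simp_all
    have n1: "blk m 0 0 \<noteq> blk m 2 20" by (unfold e, rule ne_by[of 0]) simp_all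
    have n2: "blk m 0 0 \<noteq> blk m 3 30" by (unfold e, rule ne_by[of 0]) simp_all
    have n3: "blk m 1 10 \<noteq> blk m 2 20" by (unfold e, rule ne_by[of 1]) simp_all
    have n4: "blk m 1 10 \<noteq> blk m 3 30" by (unfold e, rule ne_by[of 1]) simp_all
    have n5: "blk m 2 20 \<noteq> blk m 3 30" by (unfold e, rule ne_by[of 2]) simp_all
    note n = n0 n1 n2 n3 n4 n5
    show ?thesis unfolding P_def using n by simp
  qed
  ultimately show "\<exists>P. ppc (fam m) P \<and> card P = 4" by blast
next
  show "\<not> (\<exists>P. ppc (fam m) P \<and> card P = 4 + 1)"
  proof
    assume "\<exists>P. ppc (fam m) P \<and> card P = 4 + 1"
    then obtain P where P: "ppc (fam m) P" "card P = 5" by auto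
    define f where "f = (\<lambda>B. SOME t. t < (4::nat) \<and> t \<in> B)"
    have f: "f B < 4 \<and> f B \<in> B" if "B \<in> P" for B
    proof -
      have "B \<in> fam m" using that P(1) unfolding ppc_def by auto
      hence "\<exists>t. t < 4 \<and> t \<in> B" using fam_meet assms by simp
      thus ?thesis unfolding f_def by (rule someI_ex)
    qed
    have "inj_on f P"
    proof (rule inj_onI)
      fix B1 B2 assume h: "B1 \<in> P" "B2 \<in> P" "f B1 = f B2"
      show "B1 = B2"
      proof (rule ccontr)
        assume "B1 \<noteq> B2"
        hence "B1 \<inter> B2 = {}" using P(1) h unfolding ppc_def by auto
        thus False using f[OF h(1)] f[OF h(2)] h(3) by auto
      qed
    qed
    moreover have "f ` P \<subseteq> {..<4}" using f by auto
    ultimately have "card P \<le> card {..<(4::nat)}" using card_inj_on_le by blast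
    thus False using P(2) by simp
  qed
qed


lemma nat_arith_cases:
  fixes v :: nat
  assumes "v \<ge> 240"
  shows "78 \<le> (v - 4) div 3" "4 + 3 * ((v - 4) div 3) \<le> v"
    "v mod 3 = 0 \<Longrightarrow> 3 * (4 * ((v - 4) div 3) + 1) + 21 = 4 * v"
    "v mod 3 = 1 \<Longrightarrow> 3 * (4 * ((v - 4) div 3) + 1) + 13 = 4 * v"
    "v mod 3 = 2 \<Longrightarrow> 3 * (4 * ((v - 4) div 3) + 1) + 17 = 4 * v"
  using assms by presburger+

theorem theorem4p4:
  fixes v :: nat
  assumes "v \<ge> 240"
  shows "beta 4 v 4 \<le> nat \<lfloor>(4 * real v - 10) / 3\<rfloor>
     \<and> real (beta 4 v 4) \<ge>
         (if v mod 3 = 0 then (4 * real v - 21) / 3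
          else if v mod 3 = 1 then (4 * real v - 13) / 3
          else (4 * real v - 17) / 3)"
proof -
  define S where "S = {card \<B> |\<B>. packing {..<v} 4 \<B> \<and> max_ppc_size \<B> 4}"
  define m where "m = (v - 4) div 3"
  note na = nat_arith_cases[OF assms, folded m_def]
  have bS: "beta 4 v 4 = Max S" unfolding beta_def S_def by simp
  have mem: "4 * m + 1 \<in> S"
  proof -
    have "packing {..<v} 4 (fam m)" using fam_packing na by simp
    moreover have "max_ppc_size (fam m) 4" using fam_maxppc na by simp
    moreover have "card (fam m) = 4 * m + 1" using fam_card na by simp
    ultimately show ?thesis unfolding S_def by (intro CollectI exI[of _ "fam m"]) simp
  qed
  have finS: "finite S"
  proof (rule finite_subset[of _ "{..2^v}"])
    show "S \<subseteq> {..2^v}"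
    proof
      fix n assume "n \<in> S"
      then obtain \<B> where B: "packing {..<v} 4 \<B>" "n = card \<B>" unfolding S_def by blast
      have "\<B> \<subseteq> Pow {..<v}" using B(1) unfolding packing_def by auto
      hence "card \<B> \<le> card (Pow {..<(v::nat)})" by (intro card_mono) auto
      thus "n \<in> {..2^v}" using B(2) by (simp add: card_Pow)
    qed
  qed simp
  have SnE: "S \<noteq> {}" using mem by auto
  have MaxS: "Max S \<in> S" using Max_in[OF finS SnE] .
  then obtain \<B> where B: "packing {..<v} 4 \<B>" "max_ppc_size \<B> 4" "Max S = card \<B>"
    unfolding S_def by blast
  have up3: "3 * Max S \<le> 4 * v - 10" using upper_main[OF B(1,2) assms] B(3) by simp
  have "real (3 * Max S) \<le> real (4 * v - 10)" using up3 by (simp only: of_nat_le_iff)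
  hence "real (Max S) \<le> (4 * real v - 10) / 3" using assms by (simp add: of_nat_diff)
  hence "int (Max S) \<le> \<lfloor>(4 * real v - 10) / 3\<rfloor>" by (simp add: le_floor_iff)
  hence part1: "Max S \<le> nat \<lfloor>(4 * real v - 10) / 3\<rfloor>" by linarith
  have ge: "4 * m + 1 \<le> Max S" using Max_ge[OF finS mem] .
  have part2: "real (Max S) \<ge>
         (if v mod 3 = 0 then (4 * real v - 21) / 3
          else if v mod 3 = 1 then (4 * real v - 13) / 3
          else (4 * real v - 17) / 3)"
  proof -
    have r: "real (4 * m + 1) \<le> real (Max S)" using ge by (simp only: of_nat_le_iff)
    have "v mod 3 = 0 \<or> v mod 3 = 1 \<or> v mod 3 = 2" by arith
    moreover
    { assume h: "v mod 3 = 0"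
      have "real (3 * (4 * m + 1) + 21) = real (4 * v)" using na(3)[OF h] by simp
      hence "(4 * real v - 21) / 3 = real (4 * m + 1)" by simp
      hence ?thesis using r h by simp }
    moreover
    { assume h: "v mod 3 = 1"
      have "real (3 * (4 * m + 1) + 13) = real (4 * v)" using na(4)[OF h] by simp
      hence "(4 * real v - 13) / 3 = real (4 * m + 1)" by simp
      hence ?thesis using r h by simp }
    moreover
    { assume h: "v mod 3 = 2"
      have "real (3 * (4 * m + 1) + 17) = real (4 * v)" using na(5)[OF h] by simp
      hence "(4 * real v - 17) / 3 = real (4 * m + 1)" by simp
      hence ?thesis using r h by simp }
    ultimately show ?thesis by metis
  qed
  show ?thesis using part1 part2 bS by simp
qed

end
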